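(* Let $n\geq 2$, $\mu>0$, $1<\lambda\leq n$, and $h(x,y)=(\mu x,\lambda y)$. Then there exists an orientation preserving homeomorphism $g:\mathbb{R}\to\mathbb{R}$ with $g\neq\mathrm{id}$ and $\sup_{y}|g(y)-y|<\infty$ such that $f(x,y)=(x,g(y))$ satisfies $hfh^{-1}=f^n$ (in particular $f$ is a nontrivial orientation preserving homeomorphism of $\mathbb{R}^2$ with bounded displacement). For $\lambda=n$ one may take $g(y)=y+1$. *)

theory Defs
  imports "HOL-Analysis.Analysis"
begin

definition hmap :: "real \<Rightarrow> real \<Rightarrow> real \<times> real \<Rightarrow> real \<times> real" where
  "hmap mu lam = (\<lambda>(x, y). (mu * x, lam * y))"

definition fmap :: "(real \<Rightarrow> real) \<Rightarrow> real \<times> real \<Rightarrow> real \<times> real" where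
  "fmap g = (\<lambda>(x, y). (x, g y))"

definition good_g :: "nat \<Rightarrow> real \<Rightarrow> real \<Rightarrow> (real \<Rightarrow> real) \<Rightarrow> bool" where
  "good_g n mu lam g \<longleftrightarrow>
     (\<exists>g'. homeomorphism UNIV UNIV g g') \<and> strict_mono g \<and> g \<noteq> id \<and>
     (\<exists>B. \<forall>y. \<bar>g y - y\<bar> \<le> B) \<and>
     hmap mu lam \<circ> fmap g \<circ> inv (hmap mu lam) = fmap g ^^ n"

end

theory Submission
  imports Defs
begin

definition P :: "real \<Rightarrow> real \<Rightarrow> real" where
  "P c y = (max y 0) powr c - (max (-y) 0) powr c"

lemma P_pos: "y \<ge> 0 \<Longrightarrow> P c y = y powr c"
  by (simp add: P_def)
lemma P_neg: "y \<le> 0 \<Longrightarrow> P c y = - ((-y) powr c)"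
  by (simp add: P_def)

lemma P_sign_pos: "y \<ge> 0 \<Longrightarrow> P c y \<ge> 0" by (simp add: P_pos)
lemma P_sign_neg: "y \<le> 0 \<Longrightarrow> P c y \<le> 0" by (simp add: P_neg)

lemma P_inv: assumes "c * d = 1" shows "P c (P d y) = y"
proof (cases "y \<ge> 0")
  case True
  then show ?thesis using assms by (simp add: P_pos powr_powr mult.commute)
next
  case False
  then have "P d y = - ((-y) powr d)" by (simp add: P_neg)
  moreover have "P d y \<le> 0" using False by (simp add: P_sign_neg)
  ultimately show ?thesis using assms False by (simp add: P_neg powr_powr mult.commute)
qed

lemma P_scale: assumes "k > 0" shows "P c (k * y) = k powr c * P c y"
proof (cases "y \<ge> 0")
  case True
  then show ?thesis using assms by (simp add: P_pos powr_mult)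
next
  case False
  then have "k * y \<le> 0" using assms by (simp add: mult_nonneg_nonpos)
  then show ?thesis using assms False
    by (simp add: P_neg powr_mult[symmetric])
qed

lemma P_cont: assumes "c > 0" shows "continuous_on UNIV (P c)"
  unfolding P_def[abs_def] using assms
  by (intro continuous_intros continuous_on_powr') auto

lemma P_mono: assumes "c > 0" shows "strict_mono (P c)"
proof (rule strict_monoI)
  fix x y :: real assume xy: "x < y"
  show "P c x < P c y"
  proof (cases "x \<ge> 0")
    case True then show ?thesis using xy assms by (simp add: P_pos powr_less_mono2)
  next
    case False
    show ?thesis
    proof (cases "y \<ge> 0")
      case True
      have "P c x < 0" using False assms by (simp add: P_neg)
      then show ?thesis using True P_sign_pos[of y c] by linarith
    next
      case F2: False
      then show ?thesis using False xy assms by (simp add: P_neg powr_less_mono2)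
    qed
  qed
qed

lemma subadd: fixes x y b :: real assumes "x \<ge> 0" "y \<ge> 0" "0 < b" "b \<le> 1"
  shows "(x + y) powr b \<le> x powr b + y powr b"
proof (cases "x + y = 0")
  case True
  have "x = 0" using True assms(1,2) by linarith
  moreover have "y = 0" using True assms(1,2) by linarith
  ultimately show ?thesis by simp
next
  case False
  then have s: "x + y > 0" using assms by auto
  have hx: "x powr b = (x+y) powr b * (x/(x+y)) powr b"
    using s assms by (simp add: powr_divide)
  have hy: "y powr b = (x+y) powr b * (y/(x+y)) powr b"
    using s assms by (simp add: powr_divide)
  have "x/(x+y) \<le> (x/(x+y)) powr b"
    using powr_mono'[of b 1 "x/(x+y)"] s assms by simp
  moreover have "y/(x+y) \<le> (y/(x+y)) powr b"
    using powr_mono'[of b 1 "y/(x+y)"] s assms by simp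
  moreover have "x/(x+y) + y/(x+y) = 1" using s by (simp add: add_divide_distrib[symmetric])
  moreover have "(x+y) powr b > 0" using s by simp
  ultimately have "(x+y) powr b * 1 \<le> (x+y) powr b * (x/(x+y)) powr b + (x+y) powr b * (y/(x+y)) powr b"
    by (metis add_mono distrib_left mult_le_cancel_left_pos)
  then show ?thesis using hx hy by simp
qed

lemma P_disp: assumes "0 < b" "b \<le> 1" shows "\<bar>P b (s + 1) - P b s\<bar> \<le> 2"
proof -
  have mono: "P b s \<le> P b (s+1)" using P_mono[OF assms(1)] by (simp add: strict_mono_less_eq)
  have "P b (s+1) - P b s \<le> 2"
  proof (cases "s \<ge> 0")
    case True
    then show ?thesis using subadd[of s 1 b] assms by (simp add: P_pos)
  next
    case False
    show ?thesis
    proof (cases "s \<le> -1")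
      case True
      have "(-s) powr b \<le> (-s-1) powr b + 1 powr b"
        using subadd[of "-s-1" 1 b] True assms by simp
      then show ?thesis using True False by (simp add: P_neg)
    next
      case F2: False
      have "(s+1) powr b \<le> 1" using F2 False using F2 False assms by (intro powr_le1) auto
      moreover have "(-s) powr b \<le> 1" using F2 False assms by (intro powr_le1) auto
      ultimately show ?thesis using F2 False by (simp add: P_pos P_neg)
    qed
  qed
  then show ?thesis using mono by simp
qed

lemma fmap_pow: "fmap g ^^ n = fmap (g ^^ n)"
  by (induction n) (auto simp: fmap_def fun_eq_iff)

lemma inv_h: assumes "mu \<noteq> 0" "lam \<noteq> 0"
  shows "inv (hmap mu lam) = hmap (1/mu) (1/lam)"
  by (rule inv_equality) (auto simp: hmap_def assms split: prod.splits)

lemma funeq: assumes "mu \<noteq> 0" "lam \<noteq> 0" "\<And>y. lam * g (y / lam) = (g ^^ n) y"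
  shows "hmap mu lam \<circ> fmap g \<circ> inv (hmap mu lam) = fmap g ^^ n"
  unfolding fmap_pow inv_h[OF assms(1,2)]
  using assms by (auto simp: fun_eq_iff hmap_def fmap_def)

lemma transl_pow: "((\<lambda>y::real. y + 1) ^^ k) y = y + real k"
  by (induction k) auto

theorem mainTheorem14:
  fixes n :: nat and mu lam :: real
  assumes "n \<ge> 2" and "mu > 0" and "1 < lam" and "lam \<le> real n"
  shows "(\<exists>g. good_g n mu lam g) \<and> (lam = real n \<longrightarrow> good_g n mu lam (\<lambda>y. y + 1))"
proof
  define a where "a = ln (real n) / ln lam"
  define b where "b = ln lam / ln (real n)"
  have lnl: "ln lam > 0" using assms by simp
  have lnn: "ln (real n) \<ge> ln lam" using assms by simp
  have ab: "a * b = 1" "b * a = 1" using lnl lnn by (auto simp: a_def b_def)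
  have bpos: "b > 0" "b \<le> 1" using lnl lnn by (auto simp: b_def)
  have apos: "a > 0" using lnl lnn by (auto simp: a_def)
  have la: "lam powr a = real n" using lnl assms
    by (simp add: powr_def a_def)
  have nb: "real n powr b = lam" using lnl lnn assms
    by (simp add: powr_def b_def)
  define g where "g = (\<lambda>y. P b (P a y + 1))"
  define g' where "g' = (\<lambda>y. P b (P a y - 1))"
  have gk: "(g ^^ k) y = P b (P a y + real k)" for k y
  proof (induction k arbitrary: y)
    case 0 then show ?case by (simp add: P_inv ab)
  next
    case (Suc k) then show ?case by (simp add: g_def P_inv ab ac_simps)
  qed
  have good: "good_g n mu lam g"
    unfolding good_g_def
  proof (intro conjI)
    show "\<exists>g'. homeomorphism UNIV UNIV g g'"
    proof (intro exI[of _ g'] homeomorphismI)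
      show "continuous_on UNIV g" unfolding g_def
        using P_cont[OF apos] P_cont[OF bpos(1)]
        by (intro continuous_on_compose2[OF P_cont[OF bpos(1)]] continuous_intros) auto
      show "continuous_on UNIV g'" unfolding g'_def
        using P_cont[OF apos] P_cont[OF bpos(1)]
        by (intro continuous_on_compose2[OF P_cont[OF bpos(1)]] continuous_intros) auto
    qed (auto simp: g_def g'_def P_inv ab)
    show "strict_mono g" unfolding g_def using P_mono[OF apos] P_mono[OF bpos(1)]
      by (auto simp: strict_mono_def)
    show "g \<noteq> id"
    proof
      assume "g = id"
      then have "g 0 = 0" by simp
      moreover have "g 0 = 1" by (simp add: g_def P_pos)
      ultimately show False by simp
    qed
    show "\<exists>B. \<forall>y. \<bar>g y - y\<bar> \<le> B"
    proof (intro exI allI)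
      fix y
      have "y = P b (P a y)" by (simp add: P_inv ab)
      then have "g y - y = P b (P a y + 1) - P b (P a y)" unfolding g_def by simp
      then show "\<bar>g y - y\<bar> \<le> 2" using P_disp[OF bpos] by simp
    qed
    show "hmap mu lam \<circ> fmap g \<circ> inv (hmap mu lam) = fmap g ^^ n"
    proof (rule funeq)
      show "mu \<noteq> 0" "lam \<noteq> 0" using assms by auto
      fix y
      have "P a (y / lam) = P a y / real n"
        using P_scale[of "1/lam" a y] assms la
        by (simp add: powr_divide)
      moreover have "lam * P b z = P b (real n * z)" for z
        using P_scale[of "real n" b z] nb assms by simp
      ultimately have "lam * g (y / lam) = P b (real n * (P a y / real n + 1))"
        unfolding g_def by simp
      also have "\<dots> = P b (P a y + real n)" using assms(1) by (simp add: distrib_left)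
      finally show "lam * g (y / lam) = (g ^^ n) y" by (simp add: gk)
    qed
  qed
  then show "\<exists>g. good_g n mu lam g" by blast
next
  show "lam = real n \<longrightarrow> good_g n mu lam (\<lambda>y. y + 1)"
  proof
    assume ln: "lam = real n"
    show "good_g n mu lam (\<lambda>y. y + 1)"
      unfolding good_g_def
    proof (intro conjI)
      show "\<exists>g'. homeomorphism UNIV UNIV (\<lambda>y::real. y + 1) g'"
        by (intro exI[of _ "\<lambda>y. y - 1"] homeomorphismI) (auto intro!: continuous_intros)
      show "strict_mono (\<lambda>y::real. y + 1)" by (auto simp: strict_mono_def)
      show "(\<lambda>y::real. y + 1) \<noteq> id" by (auto simp: fun_eq_iff)
      show "\<exists>B. \<forall>y::real. \<bar>y + 1 - y\<bar> \<le> B" by auto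
      show "hmap mu lam \<circ> fmap (\<lambda>y. y + 1) \<circ> inv (hmap mu lam) = fmap (\<lambda>y. y + 1) ^^ n"
        by (rule funeq) (use assms ln in \<open>auto simp: transl_pow field_simps\<close>)
    qed
  qed
qed

end
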